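(* Let $n,k$ be integers with $1\le k\le n-2$, let $b_1\ge\dots\ge b_n\ge 0$ be any included bid profile with $b_{k+1}>0$, and let $\alpha\in(0,1)$. The R$^2$-TFRM mechanism described in the context has expected redistribution fraction (expectation over the randomization) $f^*=\alpha\cdot\frac{k}{n}$. Moreover it is allocatively efficient, restricted user incentive compatible in expectation, individually rational for users, and it is individually rational for the miner in expectation whenever $$\alpha\le\frac{n}{k+(n-k)\,b_k/b_{k+1}}.$$
   Context: Setting: transactions in a mempool belong to distinct users $i$ with valuation $\theta_i\ge0$ and bid $b_i\ge0$. The block includes the $n$ highest bids, ordered $b_1\ge\dots\ge b_n$, and confirms the top $k$ ($k\le n-2$). Let $r_i=\frac{k}{n}b_{k+1}$ for $i\le k$ and $r_j=\frac{k}{n}b_k$ for $j\in\{k+1,\dots,n\}$ (the R-TFRM rebate, i.e. $k/n$ times the $k$-th highest bid among the other included users). In R$^2$-TFRM, using trusted randomness not controlled by the miner, independently for each included user a rebate is granted with probability $\alpha$: a confirmed user $i$ pays $b_{k+1}-r_i$ with probability $\alpha$ and $b_{k+1}$ with probability $1-\alpha$; an included unconfirmed user $j$ pays $-r_j$ with probability $\alpha$ and $0$ with probability $1-\alpha$. The miner receives the sum of payments. User utility: $u_i=\mathbb{1}[i\text{ confirmed}]\,\theta_i-p_i$. Allocative efficiency: the confirmed transactions maximize total valuation. Restricted UIC in expectation: for every included user, bidding $\theta_i$ maximizes its expected utility whatever the other included users bid. IR for users: every included user's utility is nonnegative under truthful bidding. IR for the miner in expectation: the total payment $k\,b_{k+1}$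 is at least the expected total rebate. The redistribution fraction is the fraction of the VCG payment $k\,b_{k+1}$ returned to the $k$ confirmed users in the worst case. *)

theory Defs
  imports "HOL-Probability.Probability"
begin

text \<open>The n included users are indexed by 1..n; a bid profile is
  b :: nat => real (only the values on 1..n matter).  The trusted randomness is a
  vector of independent coins c :: nat => bool, c i = True meaning that user i is
  granted its rebate (probability alpha).\<close>

definition users :: "nat \<Rightarrow> nat set" where
  "users n = {1..n}"

definition kth_highest :: "nat \<Rightarrow> nat set \<Rightarrow> (nat \<Rightarrow> real) \<Rightarrow> real" where
  "kth_highest m A b = rev (sort (map b (sorted_list_of_set A))) ! (m - 1)"

text \<open>Confirmed users: the k highest bids, ties broken in favour of the smaller index.
  For a sorted profile b 1 >= ... >= b n this is exactly {1..k}.\<close>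
definition confirmed :: "nat \<Rightarrow> nat \<Rightarrow> (nat \<Rightarrow> real) \<Rightarrow> nat set" where
  "confirmed n k b = {i \<in> users n.
      card {j \<in> users n. b j > b i \<or> (b j = b i \<and> j < i)} < k}"

definition vcg_price :: "nat \<Rightarrow> nat \<Rightarrow> (nat \<Rightarrow> real) \<Rightarrow> real" where
  "vcg_price n k b = kth_highest (k + 1) (users n) b"

definition rtfrm_rebate :: "nat \<Rightarrow> nat \<Rightarrow> (nat \<Rightarrow> real) \<Rightarrow> nat \<Rightarrow> real" where
  "rtfrm_rebate n k b i = real k / real n * kth_highest k (users n - {i}) b"

definition rebate :: "nat \<Rightarrow> nat \<Rightarrow> (nat \<Rightarrow> real) \<Rightarrow> (nat \<Rightarrow> bool) \<Rightarrow> nat \<Rightarrow> real" where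
  "rebate n k b c i = (if c i then rtfrm_rebate n k b i else 0)"

definition payment :: "nat \<Rightarrow> nat \<Rightarrow> (nat \<Rightarrow> real) \<Rightarrow> (nat \<Rightarrow> bool) \<Rightarrow> nat \<Rightarrow> real" where
  "payment n k b c i =
     (if i \<in> confirmed n k b then vcg_price n k b else 0) - rebate n k b c i"

definition utility :: "nat \<Rightarrow> nat \<Rightarrow> (nat \<Rightarrow> real) \<Rightarrow> (nat \<Rightarrow> real) \<Rightarrow> (nat \<Rightarrow> bool) \<Rightarrow> nat \<Rightarrow> real" where
  "utility n k \<theta> b c i = (if i \<in> confirmed n k b then \<theta> i else 0) - payment n k b c i"

definition coins :: "nat \<Rightarrow> real \<Rightarrow> (nat \<Rightarrow> bool) pmf" where
  "coins n \<alpha> = Pi_pmf (users n) False (\<lambda>_. bernoulli_pmf \<alpha>)"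

definition expected_utility :: "nat \<Rightarrow> nat \<Rightarrow> real \<Rightarrow> (nat \<Rightarrow> real) \<Rightarrow> (nat \<Rightarrow> real) \<Rightarrow> nat \<Rightarrow> real" where
  "expected_utility n k \<alpha> \<theta> b i =
     measure_pmf.expectation (coins n \<alpha>) (\<lambda>c. utility n k \<theta> b c i)"

definition miner_revenue :: "nat \<Rightarrow> nat \<Rightarrow> (nat \<Rightarrow> real) \<Rightarrow> (nat \<Rightarrow> bool) \<Rightarrow> real" where
  "miner_revenue n k b c = (\<Sum>i\<in>users n. payment n k b c i)"

definition nonneg_profile :: "nat \<Rightarrow> (nat \<Rightarrow> real) \<Rightarrow> bool" where
  "nonneg_profile n b \<longleftrightarrow> (\<forall>i\<in>users n. 0 \<le> b i)"

definition allocatively_efficient :: "nat \<Rightarrow> nat \<Rightarrow> bool" where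
  "allocatively_efficient n k \<longleftrightarrow>
     (\<forall>\<theta>. nonneg_profile n \<theta> \<longrightarrow>
        (\<forall>S. S \<subseteq> users n \<longrightarrow> card S \<le> k \<longrightarrow>
           (\<Sum>i\<in>S. \<theta> i) \<le> (\<Sum>i\<in>confirmed n k \<theta>. \<theta> i)))"

definition restricted_UIC_exp :: "nat \<Rightarrow> nat \<Rightarrow> real \<Rightarrow> bool" where
  "restricted_UIC_exp n k \<alpha> \<longleftrightarrow>
     (\<forall>\<theta> b i b'. i \<in> users n \<longrightarrow> 0 \<le> \<theta> i \<longrightarrow> nonneg_profile n b \<longrightarrow> 0 \<le> b' \<longrightarrow>
        expected_utility n k \<alpha> \<theta> (b(i := b')) i \<le> expected_utility n k \<alpha> \<theta> (b(i := \<theta> i)) i)"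

definition IR_users :: "nat \<Rightarrow> nat \<Rightarrow> bool" where
  "IR_users n k \<longleftrightarrow>
     (\<forall>\<theta> c i. nonneg_profile n \<theta> \<longrightarrow> i \<in> users n \<longrightarrow> 0 \<le> utility n k \<theta> \<theta> c i)"

definition IR_miner_exp :: "nat \<Rightarrow> nat \<Rightarrow> real \<Rightarrow> (nat \<Rightarrow> real) \<Rightarrow> bool" where
  "IR_miner_exp n k \<alpha> b \<longleftrightarrow>
     measure_pmf.expectation (coins n \<alpha>) (\<lambda>c. \<Sum>i\<in>users n. rebate n k b c i)
       \<le> real k * vcg_price n k b"

definition expected_redistribution_fraction :: "nat \<Rightarrow> nat \<Rightarrow> real \<Rightarrow> (nat \<Rightarrow> real) \<Rightarrow> real" where
  "expected_redistribution_fraction n k \<alpha> b =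
     measure_pmf.expectation (coins n \<alpha>) (\<lambda>c. \<Sum>i\<in>confirmed n k b. rebate n k b c i)
       / (real k * vcg_price n k b)"

end

theory Submission imports Defs begin

lemma len_filter_L:
  assumes "finite A"
  shows "length (filter P (rev (sort (map b (sorted_list_of_set A))))) = card {j\<in>A. P (b j)}"
proof -
  have "length (filter P (rev (sort (map b (sorted_list_of_set A))))) =
        size (filter_mset P (mset (rev (sort (map b (sorted_list_of_set A))))))"
    by (metis mset_filter size_mset)
  also have "\<dots> = size (filter_mset P (mset (map b (sorted_list_of_set A))))" by simp
  also have "\<dots> = length (filter P (map b (sorted_list_of_set A)))"
    by (metis mset_filter size_mset)
  also have "\<dots> = length (filter (P \<circ> b) (sorted_list_of_set A))"
    by (simp add: filter_map)
  also have "\<dots> = card {j\<in>A. P (b j)}" using assms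
    by (subst distinct_length_filter) (auto intro!: arg_cong[where f=card])
  finally show ?thesis .
qed

lemma KH:
  assumes "finite A" "1 \<le> m" "m \<le> card A"
  shows "card {j\<in>A. b j > kth_highest m A b} < m \<and> m \<le> card {j\<in>A. b j \<ge> kth_highest m A b}"
proof -
  define L where "L = rev (sort (map b (sorted_list_of_set A)))"
  define v where "v = kth_highest m A b"
  have v: "v = L ! (m - 1)" unfolding v_def L_def kth_highest_def by simp
  have lenL: "length L = card A" unfolding L_def using assms(1) by simp
  have mono: "L ! l \<le> L ! j" if "j \<le> l" "l < length L" for j l
  proof -
    have s: "sorted (sort (map b (sorted_list_of_set A)))" by simp
    have ls: "length (sort (map b (sorted_list_of_set A))) = length L" unfolding L_def by simp
    show ?thesis unfolding L_def using that ls
      by (simp add: rev_nth sorted_nth_mono[OF s])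
  qed
  have "card {j\<in>A. b j > v} = length (filter (\<lambda>x. x > v) L)"
    unfolding L_def using len_filter_L[OF assms(1)] by metis
  also have "\<dots> = card {j. j < length L \<and> L ! j > v}" by (rule length_filter_conv_card)
  also have "\<dots> \<le> card {..<m-1}"
  proof (rule card_mono)
    show "{j. j < length L \<and> L ! j > v} \<subseteq> {..<m-1}"
    proof
      fix j assume "j \<in> {j. j < length L \<and> L ! j > v}"
      then have "j < length L" "L ! j > v" by auto
      then show "j \<in> {..<m-1}" using mono[of "m-1" j] v by (cases "m - 1 \<le> j") auto
    qed
  qed simp
  finally have 1: "card {j\<in>A. b j > v} < m" using assms(2) by simp
  have "card {..<m} \<le> card {j. j < length L \<and> L ! j \<ge> v}"
  proof (rule card_mono)
    show "{..<m} \<subseteq> {j. j < length L \<and> L ! j \<ge> v}"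
      using mono[of _ "m-1"] v lenL assms(2,3) by auto
  qed simp
  also have "\<dots> = length (filter (\<lambda>x. x \<ge> v) L)" by (rule length_filter_conv_card[symmetric])
  also have "\<dots> = card {j\<in>A. b j \<ge> v}"
    unfolding L_def using len_filter_L[OF assms(1)] by metis
  finally have 2: "m \<le> card {j\<in>A. b j \<ge> v}" by simp
  show ?thesis using 1 2 v_def by simp
qed

lemma KH_uniq:
  fixes b :: "'a \<Rightarrow> real"
  assumes "finite A"
    and "card {j\<in>A. b j > v} < m" "m \<le> card {j\<in>A. b j \<ge> v}"
    and "card {j\<in>A. b j > w} < m" "m \<le> card {j\<in>A. b j \<ge> w}"
  shows "v = w"
proof (rule ccontr)
  assume "v \<noteq> w"
  then consider "v < w" | "w < v" using linorder_neqE by blast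
  then show False
  proof cases
    case 1
    have "card {j\<in>A. b j \<ge> w} \<le> card {j\<in>A. b j > v}"
      by (rule card_mono) (use assms(1) 1 in auto)
    then show False using assms by linarith
  next
    case 2
    have "card {j\<in>A. b j \<ge> v} \<le> card {j\<in>A. b j > w}"
      by (rule card_mono) (use assms(1) 2 in auto)
    then show False using assms by linarith
  qed
qed

lemma KH_eq:
  assumes "finite A"
    and "card {j\<in>A. b j > v} < m" "m \<le> card {j\<in>A. b j \<ge> v}"
  shows "kth_highest m A b = v"
proof -
  have "card {j\<in>A. b j \<ge> v} \<le> card A" by (rule card_mono) (use assms in auto)
  then have "1 \<le> m" "m \<le> card A" using assms by linarith+
  note K = KH[OF assms(1) this, of b]
  show ?thesis
    by (rule KH_uniq[OF assms(1), where b=b and m=m]) (use K assms in auto)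
qed

lemma kth_cong:
  assumes "finite A" "\<forall>j\<in>A. b j = b' j"
  shows "kth_highest m A b = kth_highest m A b'"
proof -
  have eq: "map b (sorted_list_of_set A) = map b' (sorted_list_of_set A)"
    by (rule map_cong) (use assms in auto)
  show ?thesis unfolding kth_highest_def eq by (rule refl)
qed

lemma finite_coins: "finite (set_pmf (coins n \<alpha>))"
  unfolding coins_def users_def by (subst set_Pi_pmf) (auto intro!: finite_PiE_dflt)

lemma integrable_coins: "integrable (measure_pmf (coins n \<alpha>)) (f :: _ \<Rightarrow> real)"
  by (rule integrable_measure_pmf_finite[OF finite_coins])

lemma coin_exp:
  assumes "i \<in> users n" "0 \<le> \<alpha>" "\<alpha> \<le> 1"
  shows "measure_pmf.expectation (coins n \<alpha>) (\<lambda>c. if c i then r else 0) = \<alpha> * r"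
proof -
  have "measure_pmf.expectation (coins n \<alpha>) (\<lambda>c. (\<lambda>x. if x then r else 0) (c i)) =
        measure_pmf.expectation (map_pmf (\<lambda>c. c i) (coins n \<alpha>)) (\<lambda>x. if x then r else (0::real))"
    by simp
  also have "map_pmf (\<lambda>c. c i) (coins n \<alpha>) = bernoulli_pmf \<alpha>"
    unfolding coins_def using assms(1) by (subst Pi_pmf_component) (auto simp: users_def)
  finally show ?thesis using assms by simp
qed

lemma conf_vcg:
  assumes "i \<in> confirmed n k X" "1 \<le> k" "k < n"
  shows "vcg_price n k X = kth_highest k (users n - {i}) X \<and> kth_highest k (users n - {i}) X \<le> X i"
proof -
  define U where "U = users n"
  define A where "A = U - {i}"
  define q where "q = kth_highest k A X"
  have finU: "finite U" unfolding U_def users_def by simp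
  have iU: "i \<in> U" and rk: "card {j\<in>U. X j > X i \<or> (X j = X i \<and> j < i)} < k"
    using assms(1) unfolding confirmed_def U_def by auto
  have finA: "finite A" unfolding A_def using finU by simp
  have cA: "card A = n - 1" unfolding A_def U_def users_def using iU U_def users_def by simp
  have kq: "card {j\<in>A. X j > q} < k \<and> k \<le> card {j\<in>A. X j \<ge> q}"
    unfolding q_def by (rule KH[OF finA assms(2)]) (use cA assms in simp)
  have qi: "q \<le> X i"
  proof (rule ccontr)
    assume "\<not> q \<le> X i"
    then have "{j\<in>A. X j \<ge> q} \<subseteq> {j\<in>U. X j > X i \<or> (X j = X i \<and> j < i)}"
      unfolding A_def by auto
    then have "card {j\<in>A. X j \<ge> q} \<le> card {j\<in>U. X j > X i \<or> (X j = X i \<and> j < i)}"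
      by (intro card_mono) (use finU in auto)
    then show False using kq rk by linarith
  qed
  have "card {j\<in>U. X j > q} \<le> card (insert i {j\<in>A. X j > q})"
    by (intro card_mono) (use finA A_def in auto)
  also have "\<dots> \<le> Suc (card {j\<in>A. X j > q})" using finA by (simp add: card_insert_if)
  finally have g: "card {j\<in>U. X j > q} < k + 1" using kq by linarith
  have "card (insert i {j\<in>A. X j \<ge> q}) \<le> card {j\<in>U. X j \<ge> q}"
    by (intro card_mono) (use finU A_def iU qi in auto)
  moreover have "card (insert i {j\<in>A. X j \<ge> q}) = Suc (card {j\<in>A. X j \<ge> q})"
    using finA A_def by simp
  ultimately have h: "k + 1 \<le> card {j\<in>U. X j \<ge> q}" using kq by linarith
  have "vcg_price n k X = q" unfolding vcg_price_def U_def[symmetric]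
    by (rule KH_eq[OF finU g h])
  then show ?thesis using qi unfolding q_def A_def U_def by simp
qed

lemma rebate_nonneg:
  assumes "nonneg_profile n \<theta>" "1 \<le> k" "k + 2 \<le> n"
  shows "0 \<le> rtfrm_rebate n k \<theta> i"
proof -
  define A where "A = users n - {i}"
  have finA: "finite A" unfolding A_def users_def by simp
  have "card A \<ge> n - 1" unfolding A_def users_def by (simp add: card_Diff_singleton_if)
  then have kA: "k \<le> card A" using assms by linarith
  define q where "q = kth_highest k A \<theta>"
  have kq: "card {j\<in>A. \<theta> j > q} < k" unfolding q_def using KH[OF finA assms(2) kA] by blast
  have "q \<ge> 0"
  proof (rule ccontr)
    assume "\<not> q \<ge> 0"
    then have "{j\<in>A. \<theta> j > q} = A" using assms(1) unfolding nonneg_profile_def A_def by force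
    then show False using kq kA by simp
  qed
  then show ?thesis unfolding rtfrm_rebate_def A_def q_def by simp
qed

lemma utility_eq:
  "utility n k \<theta> X c i = (if i \<in> confirmed n k X then \<theta> i - vcg_price n k X else 0)
      + (if c i then rtfrm_rebate n k X i else 0)"
  unfolding utility_def payment_def rebate_def by simp

lemma exp_util:
  assumes "i \<in> users n" "0 \<le> \<alpha>" "\<alpha> \<le> 1"
  shows "expected_utility n k \<alpha> \<theta> X i =
     (if i \<in> confirmed n k X then \<theta> i - vcg_price n k X else 0) + \<alpha> * rtfrm_rebate n k X i"
proof -
  have "expected_utility n k \<alpha> \<theta> X i =
    measure_pmf.expectation (coins n \<alpha>) (\<lambda>c. (if i \<in> confirmed n k X then \<theta> i - vcg_price n k X else 0)
      + (if c i then rtfrm_rebate n k X i else 0))"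
    unfolding expected_utility_def utility_eq ..
  also have "\<dots> = (if i \<in> confirmed n k X then \<theta> i - vcg_price n k X else 0)
      + measure_pmf.expectation (coins n \<alpha>) (\<lambda>c. if c i then rtfrm_rebate n k X i else 0)"
    by (subst Bochner_Integration.integral_add) (auto intro: integrable_coins)
  also have "\<dots> = (if i \<in> confirmed n k X then \<theta> i - vcg_price n k X else 0) + \<alpha> * rtfrm_rebate n k X i"
    using coin_exp[OF assms] by simp
  finally show ?thesis .
qed

lemma exp_sum_rebate:
  assumes "I \<subseteq> users n" "0 \<le> \<alpha>" "\<alpha> \<le> 1"
  shows "measure_pmf.expectation (coins n \<alpha>) (\<lambda>c. \<Sum>i\<in>I. rebate n k b c i) =
     (\<Sum>i\<in>I. \<alpha> * rtfrm_rebate n k b i)"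
proof -
  have "measure_pmf.expectation (coins n \<alpha>) (\<lambda>c. \<Sum>i\<in>I. rebate n k b c i) =
     (\<Sum>i\<in>I. measure_pmf.expectation (coins n \<alpha>) (\<lambda>c. rebate n k b c i))"
    by (rule Bochner_Integration.integral_sum) (rule integrable_coins)
  also have "\<dots> = (\<Sum>i\<in>I. \<alpha> * rtfrm_rebate n k b i)"
    by (rule sum.cong) (use assms coin_exp in \<open>auto simp: rebate_def\<close>)
  finally show ?thesis .
qed

lemma UIC:
  assumes "1 \<le> k" "k + 2 \<le> n" "0 \<le> \<alpha>" "\<alpha> \<le> 1"
  shows "restricted_UIC_exp n k \<alpha>"
  unfolding restricted_UIC_exp_def
proof (intro allI impI)
  fix \<theta> b :: "nat \<Rightarrow> real" and i :: nat and b' :: real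
  assume iU: "i \<in> users n"
  define U where "U = users n"
  define A where "A = U - {i}"
  define B where "B = b(i := b')"
  define T where "T = b(i := \<theta> i)"
  define p where "p = kth_highest k A b"
  have finU: "finite U" unfolding U_def users_def by simp
  have finA: "finite A" unfolding A_def using finU by simp
  have pB: "kth_highest k A B = p" unfolding p_def B_def
    by (rule kth_cong[OF finA]) (auto simp: A_def)
  have pT: "kth_highest k A T = p" unfolding p_def T_def
    by (rule kth_cong[OF finA]) (auto simp: A_def)
  have rr: "rtfrm_rebate n k B i = rtfrm_rebate n k T i"
    unfolding rtfrm_rebate_def using pB pT unfolding A_def U_def by simp
  have cA: "card A = n - 1" unfolding A_def U_def users_def using iU users_def by simp
  have kA: "k \<le> card A" using cA assms by linarith
  have kp: "card {j\<in>A. b j > p} < k" unfolding p_def using KH[OF finA assms(1) kA] by blast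
  have kn: "k < n" using assms by linarith
  have main: "(if i \<in> confirmed n k B then \<theta> i - vcg_price n k B else 0)
      \<le> (if i \<in> confirmed n k T then \<theta> i - vcg_price n k T else 0)"
  proof (cases "i \<in> confirmed n k T")
    case True
    from conf_vcg[OF True assms(1) kn] pT have vT: "vcg_price n k T = p" "p \<le> \<theta> i"
      unfolding A_def U_def T_def by auto
    show ?thesis
    proof (cases "i \<in> confirmed n k B")
      case True
      from conf_vcg[OF True assms(1) kn] pB have "vcg_price n k B = p"
        unfolding A_def U_def by auto
      then show ?thesis using vT \<open>i \<in> confirmed n k T\<close> True by simp
    next
      case False
      then show ?thesis using vT \<open>i \<in> confirmed n k T\<close> by simp
    qed
  next
    case False
    have tp: "\<theta> i \<le> p"
    proof (rule ccontr)
      assume "\<not> \<theta> i \<le> p"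
      then have "{j\<in>U. T j > T i \<or> (T j = T i \<and> j < i)} \<subseteq> {j\<in>A. b j > p}"
        unfolding A_def T_def by auto
      then have "card {j\<in>U. T j > T i \<or> (T j = T i \<and> j < i)} \<le> card {j\<in>A. b j > p}"
        by (intro card_mono) (use finA in auto)
      then have "i \<in> confirmed n k T" using kp iU unfolding confirmed_def U_def by auto
      then show False using False by simp
    qed
    show ?thesis
    proof (cases "i \<in> confirmed n k B")
      case True
      from conf_vcg[OF True assms(1) kn] pB have "vcg_price n k B = p"
        unfolding A_def U_def by auto
      then show ?thesis using tp False True by simp
    next
      case False
      then show ?thesis using \<open>i \<notin> confirmed n k T\<close> by simp
    qed
  qed
  show "expected_utility n k \<alpha> \<theta> (b(i := b')) i \<le> expected_utility n k \<alpha> \<theta> (b(i := \<theta> i)) i"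
    using main rr unfolding exp_util[OF iU assms(3,4)] B_def[symmetric] T_def[symmetric] by simp
qed

lemma IRu:
  assumes "1 \<le> k" "k + 2 \<le> n"
  shows "IR_users n k"
  unfolding IR_users_def
proof (intro allI impI)
  fix \<theta> c i assume nn: "nonneg_profile n \<theta>" and iU: "i \<in> users n"
  have kn: "k < n" using assms by linarith
  have a: "0 \<le> (if i \<in> confirmed n k \<theta> then \<theta> i - vcg_price n k \<theta> else 0)"
    using conf_vcg[OF _ assms(1) kn, of i \<theta>] by auto
  have b: "0 \<le> (if c i then rtfrm_rebate n k \<theta> i else 0)"
    using rebate_nonneg[OF nn assms] by simp
  show "0 \<le> utility n k \<theta> \<theta> c i" unfolding utility_eq using a b by linarith
qed

lemma eff:
  assumes "k \<le> n"
  shows "allocatively_efficient n k"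
  unfolding allocatively_efficient_def
proof (intro allI impI)
  fix \<theta> :: "nat \<Rightarrow> real" and S
  assume nn: "nonneg_profile n \<theta>" and SU: "S \<subseteq> users n" and cS: "card S \<le> k"
  define U where "U = users n"
  define R where "R = (\<lambda>i. {j\<in>U. \<theta> j > \<theta> i \<or> (\<theta> j = \<theta> i \<and> j < i)})"
  define rk where "rk = (\<lambda>i. card (R i))"
  define C where "C = confirmed n k \<theta>"
  have finU: "finite U" unfolding U_def users_def by simp
  have C_eq: "C = {i\<in>U. rk i < k}" unfolding C_def confirmed_def rk_def R_def U_def by simp
  have finR: "finite (R i)" for i unfolding R_def using finU by simp
  have less: "rk j < rk i" if "j \<in> U" "\<theta> j > \<theta> i \<or> (\<theta> j = \<theta> i \<and> j < i)" for i j
  proof -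
    have "R j \<subset> R i" unfolding R_def using that by auto
    then show ?thesis unfolding rk_def by (rule psubset_card_mono[OF finR])
  qed
  have dom: "\<theta> j \<le> \<theta> i" if "i \<in> C" "j \<in> U - C" for i j
  proof (rule ccontr)
    assume "\<not> \<theta> j \<le> \<theta> i"
    then have "rk j < rk i" using less[of j i] that by auto
    then have "j \<in> C" using that C_eq by auto
    then show False using that by simp
  qed
  have inj: "inj_on rk U"
  proof (rule inj_onI)
    fix i j assume "i \<in> U" "j \<in> U" "rk i = rk j"
    show "i = j"
    proof (rule ccontr)
      assume "i \<noteq> j"
      then have "(\<theta> j > \<theta> i \<or> (\<theta> j = \<theta> i \<and> j < i)) \<or> (\<theta> i > \<theta> j \<or> (\<theta> i = \<theta> j \<and> i < j))"
        by linarith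
      then show False using less[of j i] less[of i j] \<open>i \<in> U\<close> \<open>j \<in> U\<close> \<open>rk i = rk j\<close> by auto
    qed
  qed
  have rkn: "rk i < n" if "i \<in> U" for i
  proof -
    have "R i \<subseteq> U - {i}" unfolding R_def by auto
    then have "rk i \<le> card (U - {i})" unfolding rk_def by (intro card_mono) (use finU in auto)
    also have "\<dots> = n - 1" using that unfolding U_def users_def by simp
    finally show ?thesis using that unfolding U_def users_def by auto
  qed
  have img: "rk ` U = {..<n}"
  proof (rule card_subset_eq)
    show "rk ` U \<subseteq> {..<n}" using rkn by auto
    show "card (rk ` U) = card {..<n}" using card_image[OF inj] unfolding U_def users_def by simp
  qed simp
  have "rk ` C = {..<k}"
  proof
    show "rk ` C \<subseteq> {..<k}" using C_eq by auto
    show "{..<k} \<subseteq> rk ` C"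
    proof
      fix x assume "x \<in> {..<k}"
      then have "x \<in> rk ` U" using img assms by auto
      then obtain i where "i \<in> U" "x = rk i" by auto
      then show "x \<in> rk ` C" using C_eq \<open>x \<in> {..<k}\<close> by auto
    qed
  qed
  moreover have "inj_on rk C" using inj C_eq by (auto intro: inj_on_subset)
  ultimately have cC: "card C = k" using card_image by fastforce
  have CU: "C \<subseteq> U" using C_eq by auto
  have finC: "finite C" using CU finU finite_subset by blast
  have finS: "finite S" using SU finU U_def finite_subset by blast
  have nnU: "\<forall>i\<in>U. 0 \<le> \<theta> i" using nn unfolding nonneg_profile_def U_def by simp
  have sS: "sum \<theta> S = sum \<theta> (S \<inter> C) + sum \<theta> (S - C)"
    using finS by (rule sum.Int_Diff)
  have sC: "sum \<theta> C = sum \<theta> (S \<inter> C) + sum \<theta> (C - S)"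
    using sum.Int_Diff[OF finC, of \<theta> S] by (simp add: Int_commute)
  have cd: "card (S - C) \<le> card (C - S)"
  proof -
    have "card (S - C) = card S - card (S \<inter> C)" by (rule card_Diff_subset_Int) (simp add: finS)
    moreover have "card (C - S) = card C - card (S \<inter> C)" using card_Diff_subset_Int[of C S] finC by (simp add: Int_commute)
    ultimately show ?thesis using cS cC by linarith
  qed
  have key: "sum \<theta> (S - C) \<le> sum \<theta> (C - S)"
  proof (cases "S - C = {}")
    case True
    have "0 \<le> sum \<theta> (C - S)" using nnU CU by (intro sum_nonneg) auto
    then show ?thesis using True by (metis sum.empty)
  next
    case False
    then have ne: "C - S \<noteq> {}" using cd finS finC by (metis card_0_eq finite_Diff le_zero_eq)
    define m where "m = Min (\<theta> ` (C - S))"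
    have fCS: "finite (C - S)" using finC by simp
    have m_le: "m \<le> \<theta> y" if "y \<in> C - S" for y unfolding m_def using fCS that by simp
    have m_in: "m \<in> \<theta> ` (C - S)" unfolding m_def using fCS ne by simp
    then have m0: "0 \<le> m" using nnU CU by auto
    have x_le: "\<theta> x \<le> m" if "x \<in> S - C" for x
      using m_in dom SU that U_def by auto
    have "sum \<theta> (S - C) \<le> real (card (S - C)) * m"
      using sum_bounded_above[of "S - C" \<theta> m] x_le by simp
    also have "\<dots> \<le> real (card (C - S)) * m" using cd m0 by (simp add: mult_right_mono)
    also have "\<dots> \<le> sum \<theta> (C - S)"
      using sum_bounded_below[of "C - S" m \<theta>] m_le by simp
    finally show ?thesis .
  qed
  show "sum \<theta> S \<le> sum \<theta> (confirmed n k \<theta>)" using sS sC key C_def by simp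
qed

lemma sorted_conf:
  assumes sorted: "\<forall>i j. 1 \<le> i \<longrightarrow> i \<le> j \<longrightarrow> j \<le> n \<longrightarrow> b j \<le> (b i :: real)" and "k \<le> n"
  shows "confirmed n k b = {1..k}"
proof -
  have R: "{j \<in> users n. b j > b i \<or> (b j = b i \<and> j < i)} = {1..<i}" if "i \<in> users n" for i
  proof
    show "{j \<in> users n. b j > b i \<or> (b j = b i \<and> j < i)} \<subseteq> {1..<i}"
    proof
      fix j assume j: "j \<in> {j \<in> users n. b j > b i \<or> (b j = b i \<and> j < i)}"
      have "j < i"
      proof (rule ccontr)
        assume "\<not> j < i"
        then have "b j \<le> b i" using sorted that j unfolding users_def by auto
        then show False using j \<open>\<not> j < i\<close> by auto
      qed
      then show "j \<in> {1..<i}" using j unfolding users_def by auto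
    qed
    show "{1..<i} \<subseteq> {j \<in> users n. b j > b i \<or> (b j = b i \<and> j < i)}"
    proof
      fix j assume j: "j \<in> {1..<i}"
      then have "b i \<le> b j" using sorted that unfolding users_def by auto
      then show "j \<in> {j \<in> users n. b j > b i \<or> (b j = b i \<and> j < i)}"
        using j that unfolding users_def by auto
    qed
  qed
  show ?thesis
  proof
    show "confirmed n k b \<subseteq> {1..k}"
      unfolding confirmed_def using R by (auto simp: users_def)
    show "{1..k} \<subseteq> confirmed n k b"
      unfolding confirmed_def using R assms(2) by (auto simp: users_def)
  qed
qed

lemma sorted_vals:
  assumes sorted: "\<forall>i j. 1 \<le> i \<longrightarrow> i \<le> j \<longrightarrow> j \<le> n \<longrightarrow> b j \<le> (b i :: real)"
    and "1 \<le> k" "k + 2 \<le> n"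
  shows "vcg_price n k b = b (k + 1)"
    and "\<And>i. i \<in> {1..k} \<Longrightarrow> rtfrm_rebate n k b i = real k / real n * b (k + 1)"
    and "\<And>i. i \<in> {k+1..n} \<Longrightarrow> rtfrm_rebate n k b i = real k / real n * b k"
proof -
  have fin: "finite (users n)" unfolding users_def by simp
  have gt1: "{j \<in> users n. b j > b (k+1)} \<subseteq> {1..k}"
  proof
    fix j assume j: "j \<in> {j \<in> users n. b j > b (k+1)}"
    have "\<not> k + 1 \<le> j" using sorted j assms unfolding users_def by force
    then show "j \<in> {1..k}" using j unfolding users_def by auto
  qed
  have ge1: "{1..k+1} \<subseteq> {j \<in> users n. b j \<ge> b (k+1)}" using sorted assms unfolding users_def by auto
  have gtk: "{j \<in> users n. b j > b k} \<subseteq> {1..<k}"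
  proof
    fix j assume j: "j \<in> {j \<in> users n. b j > b k}"
    have "\<not> k \<le> j" using sorted j assms unfolding users_def by force
    then show "j \<in> {1..<k}" using j unfolding users_def by auto
  qed
  have gek: "{1..k} \<subseteq> {j \<in> users n. b j \<ge> b k}" using sorted assms unfolding users_def by auto
  show "vcg_price n k b = b (k + 1)" unfolding vcg_price_def
  proof (rule KH_eq[OF fin])
    have "card {j \<in> users n. b j > b (k+1)} \<le> card {1..k}" by (rule card_mono[OF _ gt1]) simp
    then show "card {j \<in> users n. b j > b (k+1)} < k + 1" by simp
    have "card {1..k+1} \<le> card {j \<in> users n. b j \<ge> b (k+1)}" by (rule card_mono[OF _ ge1]) (use fin in simp)
    then show "k + 1 \<le> card {j \<in> users n. b j \<ge> b (k+1)}" by simp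
  qed
  show "rtfrm_rebate n k b i = real k / real n * b (k + 1)" if i: "i \<in> {1..k}" for i
  proof -
    have "kth_highest k (users n - {i}) b = b (k+1)"
    proof (rule KH_eq)
      show "finite (users n - {i})" using fin by simp
      have "{j \<in> users n - {i}. b j > b (k+1)} \<subseteq> {1..k} - {i}" using gt1 by auto
      then have "card {j \<in> users n - {i}. b j > b (k+1)} \<le> card ({1..k} - {i})" by (rule card_mono[rotated]) simp
      also have "\<dots> = k - 1" using i by simp
      finally show "card {j \<in> users n - {i}. b j > b (k+1)} < k" using assms by linarith
      have "{1..k+1} - {i} \<subseteq> {j \<in> users n - {i}. b j \<ge> b (k+1)}" using ge1 by auto
      then have "card ({1..k+1} - {i}) \<le> card {j \<in> users n - {i}. b j \<ge> b (k+1)}" by (rule card_mono[rotated]) (use fin in simp)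
      moreover have "card ({1..k+1} - {i}) = k" using i by simp
      ultimately show "k \<le> card {j \<in> users n - {i}. b j \<ge> b (k+1)}" by simp
    qed
    then show ?thesis unfolding rtfrm_rebate_def by simp
  qed
  show "rtfrm_rebate n k b i = real k / real n * b k" if i: "i \<in> {k+1..n}" for i
  proof -
    have "kth_highest k (users n - {i}) b = b k"
    proof (rule KH_eq)
      show "finite (users n - {i})" using fin by simp
      have "{j \<in> users n - {i}. b j > b k} \<subseteq> {1..<k}" using gtk by auto
      then have "card {j \<in> users n - {i}. b j > b k} \<le> card {1..<k}" by (rule card_mono[rotated]) simp
      then show "card {j \<in> users n - {i}. b j > b k} < k" using assms by simp
      have "{1..k} \<subseteq> {j \<in> users n - {i}. b j \<ge> b k}" using gek i by auto
      then have "card {1..k} \<le> card {j \<in> users n - {i}. b j \<ge> b k}" by (rule card_mono[rotated]) (use fin in simp)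
      then show "k \<le> card {j \<in> users n - {i}. b j \<ge> b k}" by simp
    qed
    then show ?thesis unfolding rtfrm_rebate_def by simp
  qed
qed

theorem theorem6:
  fixes n k :: nat and b :: "nat \<Rightarrow> real" and \<alpha> :: real
  assumes "1 \<le> k" and "k + 2 \<le> n"
    and sorted: "\<forall>i j. 1 \<le> i \<longrightarrow> i \<le> j \<longrightarrow> j \<le> n \<longrightarrow> b j \<le> b i"
    and nonneg: "0 \<le> b n"
    and pos: "b (k + 1) > 0"
    and "0 < \<alpha>" and "\<alpha> < 1"
  shows "expected_redistribution_fraction n k \<alpha> b = \<alpha> * (real k / real n)
     \<and> allocatively_efficient n k
     \<and> restricted_UIC_exp n k \<alpha>
     \<and> IR_users n k
     \<and> (\<alpha> \<le> real n / (real k + real (n - k) * (b k / b (k + 1))) \<longrightarrow> IR_miner_exp n k \<alpha> b)"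
proof (intro conjI impI)
  have a0: "0 \<le> \<alpha>" "\<alpha> \<le> 1" using assms by auto
  have kn: "k \<le> n" using assms by linarith
  have C: "confirmed n k b = {1..k}" by (rule sorted_conf[OF sorted kn])
  note V = sorted_vals[OF sorted assms(1,2)]
  have sub1: "{1..k} \<subseteq> users n" using kn unfolding users_def by auto
  have n0: "real n > 0" using assms by simp
  have E1: "measure_pmf.expectation (coins n \<alpha>) (\<lambda>c. \<Sum>i\<in>{1..k}. rebate n k b c i)
      = real k * (\<alpha> * (real k / real n * b (k+1)))"
    using exp_sum_rebate[OF sub1 a0, of k b] V(2) by simp
  show "expected_redistribution_fraction n k \<alpha> b = \<alpha> * (real k / real n)"
    unfolding expected_redistribution_fraction_def C E1 V(1) using pos assms(1) by (simp add: field_simps)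
  show "allocatively_efficient n k" by (rule eff[OF kn])
  show "restricted_UIC_exp n k \<alpha>" by (rule UIC[OF assms(1,2) a0])
  show "IR_users n k" by (rule IRu[OF assms(1,2)])
  assume al: "\<alpha> \<le> real n / (real k + real (n - k) * (b k / b (k + 1)))"
  have bk: "b (k+1) \<le> b k" using sorted assms by auto
  define D where "D = real k + real (n - k) * (b k / b (k + 1))"
  have "0 \<le> b k / b (k + 1)" using pos bk by simp
  then have "0 \<le> real (n - k) * (b k / b (k + 1))" by (intro mult_nonneg_nonneg) simp_all
  moreover have "real k > 0" using assms by simp
  ultimately have D0: "D > 0" unfolding D_def by linarith
  have aD: "\<alpha> * D \<le> real n" using al D0 unfolding D_def[symmetric] by (simp add: pos_le_divide_eq)
  have sub2: "{k+1..n} \<subseteq> users n" unfolding users_def by auto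
  have un: "users n = {1..k} \<union> {k+1..n}" using kn unfolding users_def by auto
  have E2: "measure_pmf.expectation (coins n \<alpha>) (\<lambda>c. \<Sum>i\<in>users n. rebate n k b c i)
      = (\<Sum>i\<in>users n. \<alpha> * rtfrm_rebate n k b i)"
    by (rule exp_sum_rebate) (use a0 in auto)
  also have "\<dots> = (\<Sum>i\<in>{1..k}. \<alpha> * rtfrm_rebate n k b i) + (\<Sum>i\<in>{k+1..n}. \<alpha> * rtfrm_rebate n k b i)"
    unfolding un by (rule sum.union_disjoint) auto
  also have "(\<Sum>i\<in>{1..k}. \<alpha> * rtfrm_rebate n k b i) = (\<Sum>i\<in>{1..k}. \<alpha> * (real k / real n * b (k+1)))"
    by (rule sum.cong) (use V(2) in auto)
  also have "(\<Sum>i\<in>{k+1..n}. \<alpha> * rtfrm_rebate n k b i) = (\<Sum>i\<in>{k+1..n}. \<alpha> * (real k / real n * b k))"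
    by (rule sum.cong) (use V(3) in auto)
  also have "(\<Sum>i\<in>{1..k}. \<alpha> * (real k / real n * b (k+1))) + (\<Sum>i\<in>{k+1..n}. \<alpha> * (real k / real n * b k))
      = real k * (\<alpha> * (real k / real n * b (k+1))) + real (n - k) * (\<alpha> * (real k / real n * b k))"
    by (simp only: sum_constant card_atLeastAtMost) simp
  also have "\<dots> = (real k * b (k+1) / real n) * (\<alpha> * D)"
    unfolding D_def using pos n0 by (simp add: field_simps)
  also have "\<dots> \<le> (real k * b (k+1) / real n) * real n"
    using aD pos n0 by (intro mult_left_mono) auto
  also have "\<dots> = real k * b (k+1)" using n0 by simp
  finally show "IR_miner_exp n k \<alpha> b" unfolding IR_miner_exp_def V(1) .
qed

end
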